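(* Let $f$ be an axis rule defined for profiles over every finite candidate set, satisfying resistance to cloning, and suppose there are constants $h^*_m,h_m>0$ ($m\ge3$) such that for every finite $C$ with $|C|=m$, $f$ restricted to profiles over $C$ is the scoring rule with $\mathrm{cost}(A,\triangleleft)=0$ if $A$ is an interval of $\triangleleft$, $\mathrm{cost}(A,\triangleleft)=h^*_m$ if $A$ is not an interval of $\triangleleft$ and contains both the leftmost and rightmost candidate of $\triangleleft$, and $\mathrm{cost}(A,\triangleleft)=h_m$ otherwise. Then $h^*_m\ge h_m$ for all $m\ge6$.
   Context: Candidates come from a fixed infinite universe. An approval ballot is a nonempty subset $A\subseteq C$; a profile over $C$ is a finite sequence of ballots. An axis is a strict linear order $\triangleleft$ on $C$. A ballot $A$ is an interval of $\triangleleft$ if for all $a,b\in A$ and every $c$ with $a\triangleleft c\triangleleft b$ we have $c\in A$. The scoring rule with cost $\mathrm{cost}$ returns $\arg\min_{\triangleleft}\sum_{A\in P}\mathrm{cost}(A,\triangleleft)$. Two candidates $a,a'$ are clones in $P$ if for every $A\in P$, $a\in A$ iff $a'\in A$. $P_{-c}$ is the profile over $C\setminus\{c\}$ obtained by removing $c$ from every ballot (ballots becoming empty are discarded); $\triangleleft_{-c}$ is the restriction of $\triangleleft$ to $C\setminus\{c\}$. Resistance to cloning: for every profile $P$ with clones $a,a'$, (1) for every $\triangleleft\in f(P)$, $\triangleleft_{-a}\in f(P_{-a})$, and (2) for every $\triangleleft^*\in f(P_{-a})$ there is $\triangleleft\in f(P)$ with $\triangleleft_{-a}=\triangleleft^*$.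 *)

theory Defs
  imports Complex_Main
begin

text \<open>Ballots are sets of candidates, profiles are lists of ballots, axes are strict
linear orders, represented as relations r (with (a,b) in r meaning a is left of b).\<close>

definition profile_over :: "'c set \<Rightarrow> 'c set list \<Rightarrow> bool" where
  "profile_over C P \<longleftrightarrow> (\<forall>A\<in>set P. A \<noteq> {} \<and> A \<subseteq> C)"

definition axes :: "'c set \<Rightarrow> 'c rel set" where
  "axes C = {r. strict_linear_order_on C r \<and> r \<subseteq> C \<times> C}"

definition is_interval :: "'c set \<Rightarrow> 'c rel \<Rightarrow> bool" where
  "is_interval A r \<longleftrightarrow> (\<forall>a\<in>A. \<forall>b\<in>A. \<forall>c. (a, c) \<in> r \<and> (c, b) \<in> r \<longrightarrow> c \<in> A)"

definition is_leftmost :: "'c set \<Rightarrow> 'c rel \<Rightarrow> 'c \<Rightarrow> bool" where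
  "is_leftmost C r x \<longleftrightarrow> x \<in> C \<and> (\<forall>y\<in>C. (y, x) \<notin> r)"

definition is_rightmost :: "'c set \<Rightarrow> 'c rel \<Rightarrow> 'c \<Rightarrow> bool" where
  "is_rightmost C r x \<longleftrightarrow> x \<in> C \<and> (\<forall>y\<in>C. (x, y) \<notin> r)"

definition scoring_rule :: "('c set \<Rightarrow> 'c rel \<Rightarrow> real) \<Rightarrow> 'c set \<Rightarrow> 'c set list \<Rightarrow> 'c rel set" where
  "scoring_rule cost C P =
     {r \<in> axes C. \<forall>r' \<in> axes C. (\<Sum>A\<leftarrow>P. cost A r) \<le> (\<Sum>A\<leftarrow>P. cost A r')}"

definition interval_cost :: "'c set \<Rightarrow> real \<Rightarrow> real \<Rightarrow> 'c set \<Rightarrow> 'c rel \<Rightarrow> real" where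
  "interval_cost C hs h A r =
     (if is_interval A r then 0
      else if (\<exists>x\<in>A. is_leftmost C r x) \<and> (\<exists>y\<in>A. is_rightmost C r y) then hs
      else h)"

definition clones :: "'c set list \<Rightarrow> 'c \<Rightarrow> 'c \<Rightarrow> bool" where
  "clones P a a' \<longleftrightarrow> (\<forall>A\<in>set P. a \<in> A \<longleftrightarrow> a' \<in> A)"

definition remove_cand :: "'c \<Rightarrow> 'c set list \<Rightarrow> 'c set list" where
  "remove_cand c P = filter (\<lambda>A. A \<noteq> {}) (map (\<lambda>A. A - {c}) P)"

definition restrict_axis :: "'c \<Rightarrow> 'c rel \<Rightarrow> 'c rel" where
  "restrict_axis c r = {(x, y) \<in> r. x \<noteq> c \<and> y \<noteq> c}"

definition resistant_to_cloning :: "('c set \<Rightarrow> 'c set list \<Rightarrow> 'c rel set) \<Rightarrow> bool" where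
  "resistant_to_cloning f \<longleftrightarrow>
     (\<forall>C P a a'. finite C \<and> profile_over C P \<and> a \<in> C \<and> a' \<in> C \<and> a \<noteq> a' \<and> clones P a a' \<longrightarrow>
        (\<forall>r\<in>f C P. restrict_axis a r \<in> f (C - {a}) (remove_cand a P)) \<and>
        (\<forall>r'\<in>f (C - {a}) (remove_cand a P). \<exists>r\<in>f C P. restrict_axis a r = r'))"

end

theory Submission
  imports Defs
begin

definition axis_of :: "('c \<Rightarrow> nat) \<Rightarrow> 'c set \<Rightarrow> 'c rel" where
  "axis_of rk C = {(p,q). p \<in> C \<and> q \<in> C \<and> rk p < rk q}"

lemma axis_of_axes:
  assumes "inj_on rk C"
  shows "axis_of rk C \<in> axes C"
  using assms
  unfolding axes_def axis_of_def strict_linear_order_on_def trans_def irrefl_def total_on_def inj_on_def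
  by auto (metis linorder_neqE_nat)

lemma three_not_all_intervals:
  assumes "r \<in> axes C" "y1 \<in> C" "y2 \<in> C" "y3 \<in> C" "y1 \<noteq> y2" "y2 \<noteq> y3" "y1 \<noteq> y3"
    "y1 \<in> B" "y3 \<in> B" "y2 \<notin> B"
  shows "\<not> (is_interval {y1,y2} r \<and> is_interval {y2,y3} r \<and> is_interval B r)"
proof
  assume H: "is_interval {y1,y2} r \<and> is_interval {y2,y3} r \<and> is_interval B r"
  have tr: "trans r" and ir: "irrefl r" and to: "total_on C r"
    using assms(1) unfolding axes_def strict_linear_order_on_def by auto
  have t12: "(y1,y2) \<in> r \<or> (y2,y1) \<in> r" and t23: "(y2,y3) \<in> r \<or> (y3,y2) \<in> r"
    and t13: "(y1,y3) \<in> r \<or> (y3,y1) \<in> r"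
    using to assms(2-7) unfolding total_on_def by blast+
  have "(y1,y2) \<in> r \<and> (y2,y3) \<in> r \<or> (y3,y2) \<in> r \<and> (y2,y1) \<in> r
        \<or> (y2,y1) \<in> r \<and> (y1,y3) \<in> r \<or> (y3,y1) \<in> r \<and> (y1,y2) \<in> r
        \<or> (y1,y3) \<in> r \<and> (y3,y2) \<in> r \<or> (y2,y3) \<in> r \<and> (y3,y1) \<in> r"
    using t12 t23 t13 tr ir unfolding trans_def irrefl_def by blast
  then show False
    using H assms(5-10) unfolding is_interval_def by blast
qed

lemma cost_nonneg:
  assumes "hs > 0" "h > 0"
  shows "interval_cost C hs h A r \<ge> 0"
  using assms unfolding interval_cost_def by auto

lemma cost_pos:
  assumes "hs > 0" "h > 0" "hs < h" "\<not> is_interval A r"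
  shows "interval_cost C hs h A r \<ge> hs"
  using assms unfolding interval_cost_def by auto

lemma cost_le:
  assumes "hs > 0" "x \<in> A" "is_leftmost C r x" "y \<in> A" "is_rightmost C r y"
  shows "interval_cost C hs h A r \<le> hs"
  using assms unfolding interval_cost_def by auto

theorem mainTheorem17:
  fixes f :: "'c set \<Rightarrow> 'c set list \<Rightarrow> 'c rel set"
    and hs h :: "nat \<Rightarrow> real"
  assumes "infinite (UNIV :: 'c set)"
    and "resistant_to_cloning f"
    and "\<And>m. m \<ge> 3 \<Longrightarrow> hs m > 0 \<and> h m > 0"
    and "\<And>C P. finite C \<Longrightarrow> card C \<ge> 3 \<Longrightarrow> profile_over C P \<Longrightarrow>
           f C P = scoring_rule (interval_cost C (hs (card C)) (h (card C))) C P"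
  shows "\<forall>m\<ge>6. hs m \<ge> h m"
proof (intro allI impI, rule ccontr)
  fix m :: nat
  assume m6: "m \<ge> 6" and lt0: "\<not> hs m \<ge> h m"
  have lt: "hs m < h m" using lt0 by simp
  have hpos: "hs m > 0" "h m > 0" using assms(3) m6 by auto
  obtain C :: "'c set" where Cfin: "finite C" and Ccard: "card C = m"
    using infinite_arbitrarily_large[OF assms(1)] by blast
  obtain xs where xsd: "distinct xs" and xsC: "set xs = C"
    using finite_distinct_list[OF Cfin] by blast
  have len: "length xs = m" using xsd xsC Ccard distinct_card by fastforce
  define a where "a = xs ! 0"
  define x where "x = xs ! 1"
  define y1 where "y1 = xs ! 2"
  define y2 where "y2 = xs ! 3"
  define y3 where "y3 = xs ! 4"
  define u where "u = xs ! 5"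
  have inCi: "\<And>i. i < 6 \<Longrightarrow> xs ! i \<in> C" using len m6 xsC by auto
  have inC: "a \<in> C" "x \<in> C" "y1 \<in> C" "y2 \<in> C" "y3 \<in> C" "u \<in> C"
    unfolding a_def x_def y1_def y2_def y3_def u_def using inCi by auto
  have dist: "a \<noteq> x" "a \<noteq> y1" "a \<noteq> y2" "a \<noteq> y3" "a \<noteq> u"
    "x \<noteq> y1" "x \<noteq> y2" "x \<noteq> y3" "x \<noteq> u"
    "y1 \<noteq> y2" "y1 \<noteq> y3" "y1 \<noteq> u" "y2 \<noteq> y3" "y2 \<noteq> u" "y3 \<noteq> u"
    unfolding a_def x_def y1_def y2_def y3_def u_def using len m6 xsd
    by (auto simp: nth_eq_iff_index_eq)
  obtain g :: "'c \<Rightarrow> nat" and N where gim: "g ` C = {i. i < N}" and ginj: "inj_on g C"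
    using finite_imp_inj_to_nat_seg[OF Cfin] by blast
  have gN: "\<And>c. c \<in> C \<Longrightarrow> g c < N" using gim by auto
  define rk1 where "rk1 c = (if c = a then 0 else if c = x then N+1 else if c = y1 then N+2
      else if c = y2 then N+3 else if c = y3 then N+4 else Suc (g c))" for c
  define rk2 where "rk2 c = (if c = x then 0 else if c = a then 1 else if c = y1 then N+2
      else if c = y2 then N+3 else if c = y3 then N+4 else Suc (Suc (g c)))" for c
  have inj1: "inj_on rk1 C"
  proof (rule inj_onI)
    fix c d assume "c \<in> C" "d \<in> C" "rk1 c = rk1 d"
    then show "c = d" using gN[of c] gN[of d] ginj dist unfolding rk1_def inj_on_def
      by (auto split: if_splits)
  qed
  have inj2: "inj_on rk2 C"
  proof (rule inj_onI)
    fix c d assume "c \<in> C" "d \<in> C" "rk2 c = rk2 d"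
    then show "c = d" using gN[of c] gN[of d] ginj dist unfolding rk2_def inj_on_def
      by (auto split: if_splits)
  qed
  define w1 where "w1 = axis_of rk1 C"
  define w2 where "w2 = axis_of rk2 C"
  have ax1: "w1 \<in> axes C" unfolding w1_def by (rule axis_of_axes[OF inj1])
  have ax2: "w2 \<in> axes C" unfolding w2_def by (rule axis_of_axes[OF inj2])
  define Q1 where "Q1 = [{x,a,y1,y3},{y1,y2},{y2,y3}]"
  define Q2 where "Q2 = [{x,y1,y3},{y1,y2},{y2,y3}]"
  define cst where "cst = interval_cost C (hs m) (h m)"
  have po1: "profile_over C Q1" unfolding Q1_def profile_over_def using inC by auto
  have po2: "profile_over C Q2" unfolding Q2_def profile_over_def using inC by auto
  have c3: "card C \<ge> 3" using Ccard m6 by simp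
  have fQ1: "f C Q1 = scoring_rule cst C Q1" using assms(4)[OF Cfin c3 po1] Ccard cst_def by simp
  have fQ2: "f C Q2 = scoring_rule cst C Q2" using assms(4)[OF Cfin c3 po2] Ccard cst_def by simp
  have nn: "\<And>A r. cst A r \<ge> 0" unfolding cst_def using cost_nonneg hpos by blast
  have lb1: "(\<Sum>A\<leftarrow>Q1. cst A r) \<ge> hs m" if "r \<in> axes C" for r
  proof -
    have "\<not> (is_interval {y1,y2} r \<and> is_interval {y2,y3} r \<and> is_interval {x,a,y1,y3} r)"
      by (rule three_not_all_intervals[OF that]) (use inC dist in auto)
    then have "cst {y1,y2} r \<ge> hs m \<or> cst {y2,y3} r \<ge> hs m \<or> cst {x,a,y1,y3} r \<ge> hs m"
      unfolding cst_def using cost_pos hpos lt by blast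
    then show ?thesis unfolding Q1_def using nn[of "{y1,y2}" r] nn[of "{y2,y3}" r] nn[of "{x,a,y1,y3}" r]
      by auto
  qed
  have int1a: "is_interval {y1,y2} w1" and int1b: "is_interval {y2,y3} w1"
    unfolding is_interval_def w1_def axis_of_def rk1_def using dist
    by (auto split: if_splits)
  have int2a: "is_interval {y1,y2} w2" and int2b: "is_interval {y2,y3} w2"
    unfolding is_interval_def w2_def axis_of_def rk2_def using dist
    by (auto split: if_splits)
  have lm1: "is_leftmost C w1 a" unfolding is_leftmost_def w1_def axis_of_def rk1_def using inC by auto
  have rm1: "is_rightmost C w1 y3" unfolding is_rightmost_def w1_def axis_of_def rk1_def using inC dist
    by (auto split: if_splits dest!: gN)
  have lm2: "is_leftmost C w2 x" unfolding is_leftmost_def w2_def axis_of_def rk2_def using inC by auto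
  have rm2: "is_rightmost C w2 y3" unfolding is_rightmost_def w2_def axis_of_def rk2_def using inC dist
    by (auto split: if_splits dest!: gN)
  have cw1: "(\<Sum>A\<leftarrow>Q1. cst A w1) \<le> hs m"
  proof -
    have "cst {x,a,y1,y3} w1 \<le> hs m" unfolding cst_def
      by (rule cost_le[OF hpos(1) _ lm1 _ rm1]) auto
    moreover have "cst {y1,y2} w1 = 0" "cst {y2,y3} w1 = 0"
      using int1a int1b unfolding cst_def interval_cost_def by auto
    ultimately show ?thesis unfolding Q1_def by simp
  qed
  have cw2: "(\<Sum>A\<leftarrow>Q2. cst A w2) \<le> hs m"
  proof -
    have "cst {x,y1,y3} w2 \<le> hs m" unfolding cst_def
      by (rule cost_le[OF hpos(1) _ lm2 _ rm2]) auto
    moreover have "cst {y1,y2} w2 = 0" "cst {y2,y3} w2 = 0"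
      using int2a int2b unfolding cst_def interval_cost_def by auto
    ultimately show ?thesis unfolding Q2_def by simp
  qed
  have w1f: "w1 \<in> f C Q1" unfolding fQ1 scoring_rule_def using ax1 cw1 lb1 by fastforce
  have cl1: "clones Q1 a x" unfolding clones_def Q1_def using dist by auto
  have cl2: "clones Q2 a u" unfolding clones_def Q2_def using dist by auto
  have rem: "remove_cand a Q1 = remove_cand a Q2"
    unfolding remove_cand_def Q1_def Q2_def using dist by auto
  have R1: "restrict_axis a w1 \<in> f (C - {a}) (remove_cand a Q2)"
    using assms(2) Cfin po1 inC dist cl1 w1f rem unfolding resistant_to_cloning_def by metis
  obtain t where tf: "t \<in> f C Q2" and tr: "restrict_axis a t = restrict_axis a w1"
    using assms(2) Cfin po2 inC dist cl2 R1 unfolding resistant_to_cloning_def by metis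
  have tax: "t \<in> axes C" and tle: "(\<Sum>A\<leftarrow>Q2. cst A t) \<le> (\<Sum>A\<leftarrow>Q2. cst A w2)"
    using tf ax2 unfolding fQ2 scoring_rule_def by auto
  have inw1: "(p, q) \<in> w1 \<Longrightarrow> p \<noteq> a \<Longrightarrow> q \<noteq> a \<Longrightarrow> (p, q) \<in> t" for p q
  proof -
    assume "(p, q) \<in> w1" "p \<noteq> a" "q \<noteq> a"
    then have "(p, q) \<in> restrict_axis a t" using tr unfolding restrict_axis_def by auto
    then show ?thesis unfolding restrict_axis_def by auto
  qed
  have e1: "(y1,y2) \<in> t" "(y2,y3) \<in> t" "(u,x) \<in> t" "(u,y1) \<in> t" "(u,y3) \<in> t"
    using inw1 inC dist gN[of u] unfolding w1_def axis_of_def rk1_def by auto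
  have nint: "\<not> is_interval {x,y1,y3} t"
    using e1 dist unfolding is_interval_def by blast
  have nlm: "\<not> (\<exists>z\<in>{x,y1,y3}. is_leftmost C t z)"
    using e1 inC unfolding is_leftmost_def by blast
  have "cst {x,y1,y3} t = h m" using nint nlm unfolding cst_def interval_cost_def by auto
  then have "(\<Sum>A\<leftarrow>Q2. cst A t) \<ge> h m"
    unfolding Q2_def using nn[of "{y1,y2}" t] nn[of "{y2,y3}" t] by simp
  then show False using tle cw2 lt by linarith
qed

end
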